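(* Let $\mathbb P$ be an LTF, $n\ge1$, $P\in\mathbf{LC}_n(\mathbb P)$, and let $D\subseteq\mathbb P\times_{E_0}\mathbb P$ be open dense in $\mathbb P\times_{E_0}\mathbb P$. Then there is $Q\in\mathbf{LC}_n(\mathbb P)$ with $Q\subseteq_n P$ such that $\langle Q(\to s),Q(\to t)\rangle\in D$ whenever $s,t\in 2^n$ and $s(n-1)\ne t(n-1)$.
   Context: Notation. $2^{<\omega}$ is the set of finite binary strings, $\Lambda$ the empty string, $\mathrm{lh}(s)$ the length of $s$, $2^n$ the set of strings of length $n$, $s\subseteq t$ means $t$ extends $s$, $s^\frown t$ concatenation. For strings $s,t$ with $\mathrm{lh}(s)\le\mathrm{lh}(t)$, $s\cdot t$ is the string of length $\mathrm{lh}(t)$ with $(s\cdot t)(k)=t(k)+s(k)\bmod 2$ for $k<\mathrm{lh}(s)$ and $(s\cdot t)(k)=t(k)$ otherwise; if $\mathrm{lh}(s)>\mathrm{lh}(t)$ then $s\cdot t=(s\restriction\mathrm{lh}(t))\cdot t$. For $T\subseteq 2^{<\omega}$, $s\cdot T=\{s\cdot t:t\in T\}$. For a tree $T$ and $s\in T$, $T\upharpoonright s=\{t\in T:s\subseteq t\lor t\subseteq s\}$. A perfect tree is a nonempty tree $T\subseteq 2^{<\omega}$ with no endpoints and no isolated branches; its stem $\mathrm{stem}(T)$ is the largest $s\in T$ with $T=T\upharpoonright s$. A perfect tree $T$ is large, written $T\in\mathbf{LT}$, if there are nonempty strings $q^i_n$ ($n<\omega$, $i=0,1$) with $\mathrm{lh}(q^0_n)=\mathrm{lh}(q^1_n)\ge1$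 and $q^i_n(0)=i$, such that $T$ consists exactly of all initial segments of strings $r^\frown q^{i(0)}_0{}^\frown\cdots{}^\frown q^{i(n)}_n$, where $r=\mathrm{stem}(T)$, $n<\omega$, $i(0),\dots,i(n)\in\{0,1\}$. Its splitting levels are $\mathrm{spl}_0(T)=\mathrm{lh}(r)$, $\mathrm{spl}_{n+1}(T)=\mathrm{spl}_n(T)+\mathrm{lh}(q^0_n)$. For $T\in\mathbf{LT}$ and $i\in\{0,1\}$, $T(\to i)=T\upharpoonright(\mathrm{stem}(T)^\frown i)$; for $s\in 2^n$ with $n\ge1$, $T(\to s)=(\cdots((T(\to s(0)))(\to s(1)))\cdots)(\to s(n-1))$, and $T(\to\Lambda)=T$. For $S,T\in\mathbf{LT}$ and $n<\omega$, $S\subseteq_n T$ means $S\subseteq T$ and $\mathrm{spl}_k(S)=\mathrm{spl}_k(T)$ for all $k<n$. A large-tree forcing notion (LTF) is a set $\mathbb P\subseteq\mathbf{LT}$ such that $T\upharpoonright u\in\mathbb P$ whenever $u\in T\in\mathbb P$, and $s\cdot T\in\mathbb P$ whenever $T\in\mathbb P$ and $s\in 2^{<\omega}$; it is ordered by inclusion (smaller trees are stronger conditions). A tree $T\in\mathbf{LT}$ is an $n$-collage over $\mathbb P$ if $T(\to s)\in\mathbb P$ for all $s\in 2^n$; $\mathbf{LC}_n(\mathbb P)$ denotes the set of such trees. The conditional product $\mathbb P\times_{E_0}\mathbb P$ is the set of pairs $\langle T,T'\rangle$ of trees $T,T'\in\mathbb P$ such that $T'=s\cdot T$ for some $s\in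 2^{<\omega}$, ordered componentwise: $\langle S,S'\rangle\le\langle T,T'\rangle$ iff $S\subseteq T$ and $S'\subseteq T'$. *)

theory Defs
  imports Main "HOL-Library.Sublist"
begin

text \<open>Finite binary strings are bool lists (False = 0, True = 1);
  s \<subseteq> t (t extends s) is prefix s t; trees are sets of bool lists.\<close>

definition sdot :: "bool list \<Rightarrow> bool list \<Rightarrow> bool list" where
  "sdot s t = map (\<lambda>k. if k < length s then (t ! k \<noteq> s ! k) else t ! k) [0..<length t]"

definition sdot_tree :: "bool list \<Rightarrow> bool list set \<Rightarrow> bool list set" where
  "sdot_tree s T = sdot s ` T"

definition restr :: "bool list set \<Rightarrow> bool list \<Rightarrow> bool list set" where
  "restr T s = {t \<in> T. prefix s t \<or> prefix t s}"

definition perfect_tree :: "bool list set \<Rightarrow> bool" where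
  "perfect_tree T \<longleftrightarrow> T \<noteq> {}
     \<and> (\<forall>u\<in>T. \<forall>v. prefix v u \<longrightarrow> v \<in> T)
     \<and> (\<forall>u\<in>T. \<exists>b. u @ [b] \<in> T)
     \<and> (\<forall>u\<in>T. \<exists>v. prefix u v \<and> v @ [False] \<in> T \<and> v @ [True] \<in> T)"

definition stem :: "bool list set \<Rightarrow> bool list" where
  "stem T = (THE s. s \<in> T \<and> T = restr T s \<and> (\<forall>u\<in>T. T = restr T u \<longrightarrow> prefix u s))"

text \<open>q witnesses largeness of T: q j i is the string q^i_j.\<close>
definition LT_witness :: "bool list set \<Rightarrow> (nat \<Rightarrow> bool \<Rightarrow> bool list) \<Rightarrow> bool" where
  "LT_witness T q \<longleftrightarrow>
     (\<forall>j i. length (q j False) = length (q j True) \<and> length (q j i) \<ge> 1 \<and> q j i ! 0 = i)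
     \<and> T = {u. \<exists>n f. prefix u (stem T @ concat (map (\<lambda>j. q j (f j)) [0..<Suc n]))}"

definition LT :: "bool list set set" where
  "LT = {T. perfect_tree T \<and> (\<exists>q. LT_witness T q)}"

definition spl :: "bool list set \<Rightarrow> nat \<Rightarrow> nat" where
  "spl T k = length (stem T) + (\<Sum>j<k. length ((SOME q. LT_witness T q) j False))"

definition to1 :: "bool list set \<Rightarrow> bool \<Rightarrow> bool list set" where
  "to1 T i = restr T (stem T @ [i])"

definition to :: "bool list set \<Rightarrow> bool list \<Rightarrow> bool list set" where
  "to T s = foldl to1 T s"

definition subseteq_n :: "bool list set \<Rightarrow> nat \<Rightarrow> bool list set \<Rightarrow> bool" where
  "subseteq_n S n T \<longleftrightarrow> S \<subseteq> T \<and> (\<forall>k<n. spl S k = spl T k)"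

definition LTF :: "bool list set set \<Rightarrow> bool" where
  "LTF P \<longleftrightarrow> P \<subseteq> LT
     \<and> (\<forall>T\<in>P. \<forall>u\<in>T. restr T u \<in> P)
     \<and> (\<forall>T\<in>P. \<forall>s. sdot_tree s T \<in> P)"

definition LC :: "nat \<Rightarrow> bool list set set \<Rightarrow> bool list set set" where
  "LC n P = {T \<in> LT. \<forall>s. length s = n \<longrightarrow> to T s \<in> P}"

definition cprod :: "bool list set set \<Rightarrow> (bool list set \<times> bool list set) set" where
  "cprod P = {(T, T'). T \<in> P \<and> T' \<in> P \<and> (\<exists>s. T' = sdot_tree s T)}"

definition cle :: "bool list set \<times> bool list set \<Rightarrow> bool list set \<times> bool list set \<Rightarrow> bool" where
  "cle p q \<longleftrightarrow> fst p \<subseteq> fst q \<and> snd p \<subseteq> snd q"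

definition open_dense_in :: "(bool list set \<times> bool list set) set \<Rightarrow> (bool list set \<times> bool list set) set \<Rightarrow> bool" where
  "open_dense_in D X \<longleftrightarrow> D \<subseteq> X
     \<and> (\<forall>p\<in>D. \<forall>q\<in>X. cle q p \<longrightarrow> q \<in> D)
     \<and> (\<forall>p\<in>X. \<exists>q\<in>D. cle q p)"

end

theory Submission
  imports Defs
begin

lemma length_sdot[simp]: "length (sdot s t) = length t"
  by (simp add: sdot_def)

lemma nth_sdot: "i < length t \<Longrightarrow> sdot s t ! i = (if i < length s then t ! i \<noteq> s ! i else t ! i)"
  by (simp add: sdot_def)

lemma sdot_sdot: "sdot w (sdot w u) = u"
  by (rule nth_equalityI) (auto simp: nth_sdot)

lemma take_sdot: "take k (sdot w c) = sdot w (take k c)"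
  by (rule nth_equalityI) (auto simp: nth_sdot)

lemma sdot_append: "length w \<le> length x \<Longrightarrow> sdot w (x @ y) = sdot w x @ y"
  by (rule nth_equalityI) (auto simp: nth_sdot nth_append)

lemma sdot_swap: "length x = length y \<Longrightarrow> sdot (sdot y x) y = x"
  by (rule nth_equalityI) (auto simp: nth_sdot)

lemma prefix_take_iff: "prefix a c \<longleftrightarrow> length a \<le> length c \<and> take (length a) c = a"
  by (auto simp: prefix_def) (metis append_take_drop_id)

lemma prefix_sdot: "prefix (sdot w u) c \<longleftrightarrow> prefix u (sdot w c)"
  unfolding prefix_take_iff by (metis length_sdot sdot_sdot take_sdot)

lemma mem_sdot_tree: "u \<in> sdot_tree w T \<longleftrightarrow> sdot w u \<in> T"
  unfolding sdot_tree_def by (metis image_iff sdot_sdot)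

definition br :: "(nat \<Rightarrow> bool \<Rightarrow> bool list) \<Rightarrow> (nat \<Rightarrow> bool) \<Rightarrow> nat \<Rightarrow> bool list" where
  "br q f N = concat (map (\<lambda>j. q j (f j)) [0..<N])"

definition tree :: "bool list \<Rightarrow> (nat \<Rightarrow> bool \<Rightarrow> bool list) \<Rightarrow> bool list set" where
  "tree r q = {u. \<exists>n f. prefix u (r @ br q f (Suc n))}"

definition wfq :: "(nat \<Rightarrow> bool \<Rightarrow> bool list) \<Rightarrow> bool" where
  "wfq q \<longleftrightarrow> (\<forall>j i. length (q j False) = length (q j True) \<and> length (q j i) \<ge> 1 \<and> q j i ! 0 = i)"

lemma LT_witness_iff: "LT_witness T q \<longleftrightarrow> wfq q \<and> T = tree (stem T) q"
  unfolding LT_witness_def wfq_def tree_def br_def by (rule refl)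

lemma br_0[simp]: "br q f 0 = []" by (simp add: br_def)
lemma br_Suc: "br q f (Suc N) = br q f N @ q N (f N)" by (simp add: br_def)

lemma br_Suc0: "br q f (Suc N) = q 0 (f 0) @ br (\<lambda>j. q (Suc j)) (\<lambda>j. f (Suc j)) N"
  by (induction N) (auto simp: br_Suc)

lemma br_add: "br q f (n + m) = br q f n @ br (\<lambda>j. q (j + n)) (\<lambda>j. f (j + n)) m"
  by (induction m) (auto simp: br_Suc add.commute)

lemma br_cong: "(\<And>j. j < N \<Longrightarrow> q j (f j) = q' j (g j)) \<Longrightarrow> br q f N = br q' g N"
  unfolding br_def by (rule arg_cong[where f=concat]) auto

lemma wf_len: "wfq q \<Longrightarrow> length (q j i) = length (q j False)"
proof -
  assume "wfq q"
  then have "length (q j False) = length (q j True)" unfolding wfq_def by blast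
  then show ?thesis by (cases i) simp_all
qed

lemma length_br: "wfq q \<Longrightarrow> length (br q f N) = (\<Sum>j<N. length (q j False))"
proof (induction N)
  case (Suc N) then show ?case using wf_len[of q N "f N"] by (simp add: br_Suc)
qed simp

lemma length_br_ge: "wfq q \<Longrightarrow> length (br q f N) \<ge> N"
proof (induction N)
  case (Suc N)
  have "length (q N (f N)) \<ge> 1" using Suc.prems unfolding wfq_def by blast
  then show ?case using Suc by (simp add: br_Suc)
qed simp

lemma prefix_br_mono: "N \<le> M \<Longrightarrow> prefix (br q f N) (br q f M)"
  by (metis br_add le_Suc_ex prefix_def)

lemma wf_shift: "wfq q \<Longrightarrow> wfq (\<lambda>j. q (j + k))"
  unfolding wfq_def by blast

lemma wf_shift1: "wfq q \<Longrightarrow> wfq (\<lambda>j. q (Suc j))"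
  unfolding wfq_def by blast

lemma tree_iff: "u \<in> tree r q \<longleftrightarrow> (\<exists>n f. prefix u (r @ br q f n))"
  unfolding tree_def
proof safe
  fix n f assume "prefix u (r @ br q f n)"
  moreover have "prefix (r @ br q f n) (r @ br q f (Suc n))" by (simp add: prefix_br_mono)
  ultimately show "\<exists>n f. prefix u (r @ br q f (Suc n))" by (meson prefix_order.trans)
qed blast

lemma prefix_nth: "prefix u x \<Longrightarrow> k < length u \<Longrightarrow> u ! k = x ! k"
  by (auto simp: prefix_def nth_append)

lemma prefix_q: "wfq q \<Longrightarrow> prefix [i] (q j i)"
proof -
  assume w: "wfq q"
  then have "length (q j i) \<ge> 1" "q j i ! 0 = i" unfolding wfq_def by blast+
  then show ?thesis by (cases "q j i") auto
qed

lemma q_nonempty: "wfq q \<Longrightarrow> q j i \<noteq> []"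
  using prefix_q[of q i j] by auto

lemma tree_memI: "prefix u (r @ br q f n) \<Longrightarrow> u \<in> tree r q"
  using tree_iff by blast

lemma tree_memE: "u \<in> tree r q \<Longrightarrow> (\<And>n f. prefix u (r @ br q f n) \<Longrightarrow> P) \<Longrightarrow> P"
  using tree_iff by blast

lemma root_in_tree: "prefix u r \<Longrightarrow> u \<in> tree r q"
  by (rule tree_memI[of _ _ _ undefined 0]) simp

lemma tree_comparable: "u \<in> tree r q \<Longrightarrow> prefix u r \<or> prefix r u"
  by (erule tree_memE) (auto simp: prefix_append)

lemma tree_stem_prefix: "u \<in> tree r q \<Longrightarrow> length r \<le> length u \<Longrightarrow> prefix r u"
  using tree_comparable prefix_length_prefix by blast

lemma branch_snoc_in: "wfq q \<Longrightarrow> (r @ br q f N) @ [b] \<in> tree r q"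
proof -
  assume w: "wfq q"
  have "br q (f(N:=b)) N = br q f N" by (rule br_cong) simp
  then have e: "r @ br q (f(N:=b)) (Suc N) = (r @ br q f N) @ q N b" by (simp add: br_Suc)
  have "prefix ((r @ br q f N) @ [b]) ((r @ br q f N) @ q N b)"
    using prefix_q[OF w, of b N] by simp
  then show ?thesis using e by (metis tree_memI)
qed

lemma tree_prefix_closed: "u \<in> tree r q \<Longrightarrow> prefix v u \<Longrightarrow> v \<in> tree r q"
  by (metis tree_iff prefix_order.trans)

lemma prefix_snoc_nth: "prefix u x \<Longrightarrow> length u < length x \<Longrightarrow> prefix (u @ [x ! length u]) x"
  unfolding prefix_take_iff by (auto simp: take_Suc_conv_app_nth)

lemma perfect_tree_tree: "wfq q \<Longrightarrow> perfect_tree (tree r q)"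
  unfolding perfect_tree_def
proof (intro conjI ballI allI impI)
  assume w: "wfq q"
  show "tree r q \<noteq> {}" using root_in_tree[of r r q] by auto
  show "v \<in> tree r q" if "u \<in> tree r q" "prefix v u" for u v
    using that by (rule tree_prefix_closed)
  show "\<exists>v. prefix u v \<and> v @ [False] \<in> tree r q \<and> v @ [True] \<in> tree r q" if hu: "u \<in> tree r q" for u
  proof -
    obtain n f where "prefix u (r @ br q f n)" using hu tree_iff by blast
    then show ?thesis using branch_snoc_in[OF w] by blast
  qed
  show "\<exists>b. u @ [b] \<in> tree r q" if hu: "u \<in> tree r q" for u
  proof -
    obtain n f where p: "prefix u (r @ br q f n)" using hu tree_iff by blast
    let ?x = "(r @ br q f n) @ [True]"
    have m: "?x \<in> tree r q" by (rule branch_snoc_in[OF w])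
    have p2: "prefix u ?x" using p prefix_order.trans by (metis prefix_append prefix_order.refl)
    have l: "length u < length ?x" using p prefix_length_le by fastforce
    have "prefix (u @ [?x ! length u]) ?x" by (rule prefix_snoc_nth[OF p2 l])
    then show ?thesis using m tree_prefix_closed by blast
  qed
qed

lemma stem_tree: "wfq q \<Longrightarrow> stem (tree r q) = r"
proof -
  assume w: "wfq q"
  let ?T = "tree r q"
  have rT: "r \<in> ?T" by (rule root_in_tree) simp
  have rr: "?T = restr ?T r" unfolding restr_def using tree_comparable by blast
  have maxr: "prefix u r" if "u \<in> ?T" "?T = restr ?T u" for u
  proof (rule ccontr)
    assume nu: "\<not> prefix u r"
    then have pru: "prefix r u" using tree_comparable that(1) by blast
    with nu have lu: "length r < length u"
      by (metis le_neq_implies_less prefix_length_le prefix_length_prefix prefix_order.refl)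
    let ?b = "u ! length r"
    have "(r @ br q (\<lambda>_. False) 0) @ [\<not> ?b] \<in> ?T" by (rule branch_snoc_in[OF w])
    then have wT: "r @ [\<not> ?b] \<in> ?T" by simp
    then have "r @ [\<not> ?b] \<in> restr ?T u" using that(2) by simp
    then have "prefix u (r @ [\<not> ?b]) \<or> prefix (r @ [\<not> ?b]) u" unfolding restr_def by blast
    then show False
    proof
      assume "prefix u (r @ [\<not> ?b])"
      then have "u ! length r = (r @ [\<not> ?b]) ! length r" using lu prefix_nth by blast
      then show False by simp
    next
      assume "prefix (r @ [\<not> ?b]) u"
      then have "(r @ [\<not> ?b]) ! length r = u ! length r" using prefix_nth by fastforce
      then show False by simp
    qed
  qed
  show ?thesis unfolding stem_def
  proof (rule the_equality)
    show "r \<in> ?T \<and> ?T = restr ?T r \<and> (\<forall>u\<in>?T. ?T = restr ?T u \<longrightarrow> prefix u r)"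
      using rT rr maxr by blast
    fix s assume "s \<in> ?T \<and> ?T = restr ?T s \<and> (\<forall>u\<in>?T. ?T = restr ?T u \<longrightarrow> prefix u s)"
    then have "prefix s r" "prefix r s" using maxr rT rr by blast+
    then show "s = r" by (rule prefix_order.antisym)
  qed
qed

lemma tree_LT: "wfq q \<Longrightarrow> tree r q \<in> LT"
  unfolding LT_def using perfect_tree_tree LT_witness_iff stem_tree by auto

lemma LT_tree: "T \<in> LT \<Longrightarrow> \<exists>q. wfq q \<and> T = tree (stem T) q"
  unfolding LT_def using LT_witness_iff by auto

lemma restr_tree: "wfq q \<Longrightarrow> restr (tree r q) (r @ [i]) = tree (r @ q 0 i) (\<lambda>j. q (Suc j))"
proof (intro set_eqI iffI)
  assume w: "wfq q"
  fix u assume "u \<in> restr (tree r q) (r @ [i])"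
  then have uT: "u \<in> tree r q" and c: "prefix (r @ [i]) u \<or> prefix u (r @ [i])"
    unfolding restr_def by auto
  obtain n f where p: "prefix u (r @ br q f n)" using uT tree_iff by blast
  from c show "u \<in> tree (r @ q 0 i) (\<lambda>j. q (Suc j))"
  proof
    assume "prefix u (r @ [i])"
    moreover have "prefix (r @ [i]) (r @ q 0 i)" using prefix_q[OF w] by simp
    ultimately show ?thesis using root_in_tree prefix_order.trans by blast
  next
    assume pr: "prefix (r @ [i]) u"
    then have lu: "length r < length u" using prefix_length_le by fastforce
    have "n \<noteq> 0" using p lu prefix_length_le[of u r] by (cases n) auto
    then obtain n' where n: "n = Suc n'" using not0_implies_Suc by blast
    have e: "r @ br q f n = r @ q 0 (f 0) @ br (\<lambda>j. q (Suc j)) (\<lambda>j. f (Suc j)) n'"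
      using n br_Suc0 by simp
    have "(r @ [i]) ! length r = u ! length r" using prefix_nth[OF pr, of "length r"] by simp
    then have "u ! length r = i" by simp
    moreover have "u ! length r = (r @ br q f n) ! length r" using p lu prefix_nth by blast
    moreover have "(r @ br q f n) ! length r = f 0"
      using e q_nonempty[OF w] w unfolding wfq_def by (simp add: nth_append)
    ultimately have "f 0 = i" by simp
    then have "prefix u ((r @ q 0 i) @ br (\<lambda>j. q (Suc j)) (\<lambda>j. f (Suc j)) n')" using p e by simp
    then show ?thesis by (rule tree_memI)
  qed
next
  assume w: "wfq q"
  fix u assume "u \<in> tree (r @ q 0 i) (\<lambda>j. q (Suc j))"
  then obtain n g where p: "prefix u ((r @ q 0 i) @ br (\<lambda>j. q (Suc j)) g n)" using tree_iff by blast
  let ?f = "case_nat i g"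
  have e: "r @ br q ?f (Suc n) = (r @ q 0 i) @ br (\<lambda>j. q (Suc j)) g n"
    by (simp add: br_Suc0)
  then have uT: "u \<in> tree r q" using p tree_memI by metis
  have "prefix (r @ [i]) ((r @ q 0 i) @ br (\<lambda>j. q (Suc j)) g n)" using prefix_q[OF w, of i 0]
    by (metis append_assoc prefix_append same_prefix_prefix)
  then have "prefix (r @ [i]) u \<or> prefix u (r @ [i])" using p prefix_same_cases by blast
  then show "u \<in> restr (tree r q) (r @ [i])" unfolding restr_def using uT by blast
qed

lemma to1_tree: "wfq q \<Longrightarrow> to1 (tree r q) i = tree (r @ q 0 i) (\<lambda>j. q (Suc j))"
  unfolding to1_def by (simp add: stem_tree restr_tree)

lemma to_tree: "wfq q \<Longrightarrow> to (tree r q) s = tree (r @ br q (\<lambda>j. s ! j) (length s)) (\<lambda>j. q (j + length s))"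
proof (induction s arbitrary: r q)
  case Nil then show ?case by (simp add: to_def)
next
  case (Cons i s)
  have "to (tree r q) (i # s) = to (tree (r @ q 0 i) (\<lambda>j. q (Suc j))) s"
    by (simp add: to_def to1_tree[OF Cons.prems])
  also have "\<dots> = tree ((r @ q 0 i) @ br (\<lambda>j. q (Suc j)) (\<lambda>j. s ! j) (length s)) (\<lambda>j. q (Suc (j + length s)))"
    using Cons.IH[OF wf_shift1[OF Cons.prems]] by simp
  also have "\<dots> = tree (r @ br q (\<lambda>j. (i # s) ! j) (length (i # s))) (\<lambda>j. q (j + length (i # s)))"
    by (simp add: br_Suc0)
  finally show ?case .
qed

lemma first_seg_aux:
  assumes w: "wfq q" and w': "wfq q'" and sub: "tree r q \<subseteq> tree r q'"
  shows "length (q' 0 i) \<le> length (q 0 i) \<and> (\<exists>rest. prefix (q 0 i) (q' 0 i @ rest))"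
proof -
  have key: "\<exists>rest. prefix (q 0 i @ [b]) (q' 0 i @ rest)" for b
  proof -
    have "(r @ br q (\<lambda>_. i) 1) @ [b] \<in> tree r q" by (rule branch_snoc_in[OF w])
    then have "r @ q 0 i @ [b] \<in> tree r q" by (simp add: br_Suc)
    then have "r @ q 0 i @ [b] \<in> tree r q'" using sub by blast
    then obtain n g where p: "prefix (r @ q 0 i @ [b]) (r @ br q' g n)" using tree_iff by blast
    have "n \<noteq> 0" using p prefix_length_le[of "r @ q 0 i @ [b]" r] by (cases n) auto
    then obtain n' where n: "n = Suc n'" using not0_implies_Suc by blast
    have p2: "prefix (q 0 i @ [b]) (q' 0 (g 0) @ br (\<lambda>j. q' (Suc j)) (\<lambda>j. g (Suc j)) n')"
      using p n br_Suc0 by simp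
    have "(q 0 i @ [b]) ! 0 = i" using q_nonempty[OF w] w unfolding wfq_def by (simp add: nth_append)
    moreover have "(q 0 i @ [b]) ! 0 = (q' 0 (g 0) @ br (\<lambda>j. q' (Suc j)) (\<lambda>j. g (Suc j)) n') ! 0"
      using prefix_nth[OF p2, of 0] by simp
    moreover have "(q' 0 (g 0) @ br (\<lambda>j. q' (Suc j)) (\<lambda>j. g (Suc j)) n') ! 0 = g 0"
      using q_nonempty[OF w'] w' unfolding wfq_def by (simp add: nth_append)
    ultimately have "g 0 = i" by simp
    then show ?thesis using p2 by blast
  qed
  obtain r1 where r1: "prefix (q 0 i @ [True]) (q' 0 i @ r1)" using key by blast
  obtain r2 where r2: "prefix (q 0 i @ [False]) (q' 0 i @ r2)" using key by blast
  have "length (q' 0 i) \<le> length (q 0 i)"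
  proof (rule ccontr)
    assume "\<not> ?thesis"
    then have l: "length (q 0 i) < length (q' 0 i)" by simp
    have "(q 0 i @ [True]) ! length (q 0 i) = (q' 0 i @ r1) ! length (q 0 i)"
      using prefix_nth[OF r1, of "length (q 0 i)"] by simp
    moreover have "(q 0 i @ [False]) ! length (q 0 i) = (q' 0 i @ r2) ! length (q 0 i)"
      using prefix_nth[OF r2, of "length (q 0 i)"] by simp
    ultimately show False using l by (simp add: nth_append)
  qed
  moreover have "prefix (q 0 i) (q' 0 i @ r1)" using r1 by (metis prefix_order.trans prefix_append prefix_order.refl)
  ultimately show ?thesis by blast
qed

lemma first_seg_eq:
  assumes w: "wfq q" and w': "wfq q'" and eq: "tree r q = tree r q'"
  shows "q 0 i = q' 0 i"
proof -
  obtain r1 where a: "length (q' 0 i) \<le> length (q 0 i)" "prefix (q 0 i) (q' 0 i @ r1)"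
    using first_seg_aux[OF w w', of r i] eq by auto
  have b: "length (q 0 i) \<le> length (q' 0 i)"
    using first_seg_aux[OF w' w, of r i] eq by auto
  have t: "take (length (q 0 i)) (q' 0 i @ r1) = q 0 i" using a(2) unfolding prefix_take_iff by blast
  have "length (q 0 i) = length (q' 0 i)" using a b by simp
  then show ?thesis using t by simp
qed

lemma tree_unique_aux: "\<forall>r q q'. wfq q \<longrightarrow> wfq q' \<longrightarrow> tree r q = tree r q' \<longrightarrow> q j = q' j"
proof (induction j)
  case 0 then show ?case using first_seg_eq by blast
next
  case (Suc j)
  show ?case
  proof (intro allI impI)
    fix r q q' assume w: "wfq q" and w': "wfq q'" and eq: "tree r q = tree r q'"
    have e0: "q 0 False = q' 0 False" by (rule first_seg_eq[OF w w' eq])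
    have "tree (r @ q 0 False) (\<lambda>j. q (Suc j)) = tree (r @ q 0 False) (\<lambda>j. q' (Suc j))"
      using restr_tree[OF w, of r False] restr_tree[OF w', of r False] eq e0 by simp
    then show "q (Suc j) = q' (Suc j)" using Suc.IH wf_shift1[OF w] wf_shift1[OF w'] by blast
  qed
qed

lemma tree_unique: "wfq q \<Longrightarrow> wfq q' \<Longrightarrow> tree r q = tree r q' \<Longrightarrow> q = q'"
  using tree_unique_aux by blast

lemma spl_tree: "wfq q \<Longrightarrow> spl (tree r q) k = length r + (\<Sum>j<k. length (q j False))"
proof -
  assume w: "wfq q"
  have "(SOME q'. LT_witness (tree r q) q') = q"
  proof (rule some_equality)
    show "LT_witness (tree r q) q" using w by (simp add: LT_witness_iff stem_tree)
    fix q' assume "LT_witness (tree r q) q'"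
    then have "wfq q'" "tree r q = tree r q'" by (simp_all add: LT_witness_iff stem_tree w)
    then show "q' = q" using tree_unique w by metis
  qed
  then show ?thesis unfolding spl_def by (simp add: stem_tree w)
qed

lemma sdot_tree_tree: "length w \<le> length x \<Longrightarrow> sdot_tree w (tree x q) = tree (sdot w x) q"
proof (intro set_eqI)
  fix u assume l: "length w \<le> length x"
  have "u \<in> sdot_tree w (tree x q) \<longleftrightarrow> (\<exists>n f. prefix (sdot w u) (x @ br q f n))"
    by (simp add: mem_sdot_tree tree_iff)
  also have "\<dots> \<longleftrightarrow> (\<exists>n f. prefix u (sdot w x @ br q f n))"
    by (simp add: prefix_sdot sdot_append[OF l])
  also have "\<dots> \<longleftrightarrow> u \<in> tree (sdot w x) q" by (simp add: tree_iff)
  finally show "u \<in> sdot_tree w (tree x q) \<longleftrightarrow> u \<in> tree (sdot w x) q" .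
qed

lemma to_subset: "to T s \<subseteq> T"
proof (induction s arbitrary: T)
  case Nil then show ?case by (simp add: to_def)
next
  case (Cons i s)
  have "to T (i # s) = to (to1 T i) s" by (simp add: to_def)
  also have "\<dots> \<subseteq> to1 T i" by (rule Cons.IH)
  also have "\<dots> \<subseteq> T" unfolding to1_def restr_def by blast
  finally show ?case .
qed

lemma to1_in_P: "LTF P \<Longrightarrow> T \<in> P \<Longrightarrow> to1 T i \<in> P"
proof -
  assume L: "LTF P" and T: "T \<in> P"
  then have "T \<in> LT" unfolding LTF_def by blast
  then obtain q where w: "wfq q" and e: "T = tree (stem T) q" using LT_tree by blast
  have "stem T @ [i] \<in> T" using e branch_snoc_in[OF w, of "stem T" "\<lambda>_. False" 0 i] by simp
  then show ?thesis unfolding to1_def using L T unfolding LTF_def by blast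
qed

lemma to_in_P: "LTF P \<Longrightarrow> T \<in> P \<Longrightarrow> to T s \<in> P"
proof (induction s arbitrary: T)
  case Nil then show ?case by (simp add: to_def)
next
  case (Cons i s)
  have "to T (i # s) = to (to1 T i) s" by (simp add: to_def)
  then show ?case using Cons.IH[OF Cons.prems(1) to1_in_P[OF Cons.prems]] by simp
qed

lemma tree_decomp:
  assumes w: "wfq q" and u: "u \<in> tree r q"
  shows "\<exists>s. length s = n \<and> u \<in> to (tree r q) s"
proof -
  obtain N f where p: "prefix u (r @ br q f N)" using u tree_iff by blast
  have "prefix (br q f N) (br q f (n + N))" by (rule prefix_br_mono) simp
  then have p2: "prefix u (r @ br q f (n + N))" using p by (metis prefix_order.trans same_prefix_prefix)
  let ?s = "map f [0..<n]"
  have "br q f n = br q (\<lambda>j. ?s ! j) n" by (rule br_cong) simp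
  then have "br q f n = br q (\<lambda>j. ?s ! j) (length ?s)" by simp
  then have "r @ br q f (n + N) = (r @ br q (\<lambda>j. ?s ! j) (length ?s)) @ br (\<lambda>j. q (j + length ?s)) (\<lambda>j. f (j + n)) N"
    by (simp add: br_add)
  then have "u \<in> tree (r @ br q (\<lambda>j. ?s ! j) (length ?s)) (\<lambda>j. q (j + length ?s))"
    using p2 tree_memI by metis
  then show ?thesis using to_tree[OF w] by (metis length_map length_upt minus_nat.diff_0)
qed

lemma shift_tree: "length x = length y \<Longrightarrow> tree (x @ E) qq = sdot_tree (sdot y x) (tree (y @ E) qq)"
proof -
  assume l: "length x = length y"
  have "sdot_tree (sdot y x) (tree (y @ E) qq) = tree (sdot (sdot y x) (y @ E)) qq"
    by (rule sdot_tree_tree) (simp add: l)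
  also have "sdot (sdot y x) (y @ E) = sdot (sdot y x) y @ E" by (rule sdot_append) (simp add: l)
  also have "sdot (sdot y x) y = x" by (rule sdot_swap[OF l])
  finally show ?thesis by simp
qed

lemma cone_cprod:
  assumes Q: "Q \<in> LC n P" and x: "length x = n" and y: "length y = n"
  shows "(to Q x, to Q y) \<in> cprod P"
proof -
  have QP: "to Q x \<in> P" "to Q y \<in> P" using Q x y unfolding LC_def by auto
  have "Q \<in> LT" using Q unfolding LC_def by auto
  then obtain q where w: "wfq q" and e: "Q = tree (stem Q) q" using LT_tree by blast
  let ?p = "\<lambda>z. stem Q @ br q (\<lambda>j. z ! j) n"
  have tx: "to Q x = tree (?p x) (\<lambda>j. q (j + n))" using to_tree[OF w, of "stem Q" x] e x by simp
  have ty: "to Q y = tree (?p y) (\<lambda>j. q (j + n))" using to_tree[OF w, of "stem Q" y] e y by simp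
  have l: "length (?p y) = length (?p x)" by (simp add: length_br[OF w])
  have "to Q y = sdot_tree (sdot (?p x) (?p y)) (to Q x)"
    using shift_tree[OF l, of "[]"] tx ty by simp
  then show ?thesis unfolding cprod_def using QP by blast
qed

lemma prefix_drop_eq: "prefix x y \<Longrightarrow> y = x @ drop (length x) y"
  by (auto simp: prefix_def)

lemma one_step:
  assumes L: "LTF P" and n: "n \<ge> 1" and Q: "Q \<in> LC n P" and D: "open_dense_in D (cprod P)"
    and s: "length s = n" and t: "length t = n" and st: "s ! (n - 1) \<noteq> t ! (n - 1)"
  shows "\<exists>Q'\<in>LC n P. subseteq_n Q' n Q \<and> (\<forall>x. length x = n \<longrightarrow> to Q' x \<subseteq> to Q x)
           \<and> (to Q' s, to Q' t) \<in> D"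
proof -
  have QLT: "Q \<in> LT" using Q unfolding LC_def by auto
  define r where "r = stem Q"
  obtain q where w: "wfq q" and eQ: "Q = tree r q" using LT_tree[OF QLT] r_def by blast
  define p where "p x = r @ br q (\<lambda>j. x ! j) n" for x
  define C0 where "C0 = (\<lambda>j. q (j + n))"
  have toQ: "to Q x = tree (p x) C0" if "length x = n" for x
    using to_tree[OF w, of r x] that eQ p_def C0_def by simp
  have lp: "length (p x) = length (p s)" for x by (simp add: p_def length_br[OF w])
  have cQ: "(to Q s, to Q t) \<in> cprod P" by (rule cone_cprod[OF Q s t])
  obtain A B where AB: "(A, B) \<in> D" and cAB: "cle (A, B) (to Q s, to Q t)"
    using D cQ unfolding open_dense_in_def by fastforce
  have ABc: "(A, B) \<in> cprod P" using AB D unfolding open_dense_in_def by blast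
  then have AP: "A \<in> P" and BP: "B \<in> P" and "\<exists>w'. B = sdot_tree w' A" unfolding cprod_def by auto
  then obtain w' where Bw: "B = sdot_tree w' A" by blast
  have AsubQ: "A \<subseteq> to Q s" and BsubQ: "B \<subseteq> to Q t" using cAB unfolding cle_def by auto
  have "A \<in> LT" using AP L unfolding LTF_def by blast
  then obtain qA where wA: "wfq qA" and eA: "A = tree (stem A) qA" using LT_tree by blast
  define m where "m = length w' + length (p s)"
  define a' where "a' = stem A @ br qA (\<lambda>j. replicate m False ! j) m"
  define qC where "qC = (\<lambda>j. qA (j + m))"
  have wC: "wfq qC" unfolding qC_def by (rule wf_shift[OF wA])
  define A' where "A' = to A (replicate m False)"
  have eA': "A' = tree a' qC" unfolding A'_def a'_def qC_def using to_tree[OF wA, of "stem A" "replicate m False"] eA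
    by simp
  have la': "length a' \<ge> m" unfolding a'_def using length_br_ge[OF wA] by (metis le_add2 length_append order.trans)
  have A'P: "A' \<in> P" unfolding A'_def by (rule to_in_P[OF L AP])
  have A'A: "A' \<subseteq> A" unfolding A'_def by (rule to_subset)
  define B' where "B' = sdot_tree w' A'"
  have B'P: "B' \<in> P" using L A'P unfolding B'_def LTF_def by blast
  have B'B: "B' \<subseteq> B" unfolding B'_def Bw sdot_tree_def using A'A by blast
  have eB': "B' = tree (sdot w' a') qC" unfolding B'_def eA' by (rule sdot_tree_tree) (use la' m_def in simp)
  have "(A', B') \<in> cprod P" unfolding cprod_def B'_def using A'P B'P B'_def by blast
  moreover have "cle (A', B') (A, B)" unfolding cle_def using A'A B'B by simp
  ultimately have A'B'D: "(A', B') \<in> D" using AB D unfolding open_dense_in_def by blast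
  have "a' \<in> A'" unfolding eA' by (rule root_in_tree) simp
  then have "a' \<in> tree (p s) C0" using A'A AsubQ toQ[OF s] by blast
  moreover have "length (p s) \<le> length a'" using la' m_def by simp
  ultimately have "prefix (p s) a'" by (rule tree_stem_prefix)
  then have a'e: "a' = p s @ drop (length (p s)) a'" by (rule prefix_drop_eq)
  define e where "e = drop (length (p s)) a'"
  define b' where "b' = sdot w' a'"
  have "b' \<in> B'" unfolding eB' b'_def by (rule root_in_tree) simp
  then have "b' \<in> tree (p t) C0" using B'B BsubQ toQ[OF t] by blast
  moreover have "length (p t) \<le> length b'" using la' m_def lp[of t] by (simp add: b'_def)
  ultimately have "prefix (p t) b'" by (rule tree_stem_prefix)
  then have b'e: "b' = p t @ drop (length (p t)) b'" by (rule prefix_drop_eq)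
  define e' where "e' = drop (length (p t)) b'"
  have lee: "length e' = length e" unfolding e_def e'_def b'_def using lp[of t] by simp
  define E where "E i = (if i = s ! (n - 1) then e else e')" for i
  define q' where "q' j i = (if j < n - 1 then q j i else if j = n - 1 then q j i @ E i else qC (j - n) i)" for j i
  have lE: "length (E i) = length e" for i unfolding E_def using lee by simp
  have wq': "wfq q'"
    unfolding wfq_def
  proof (intro allI)
    fix j i
    show "length (q' j False) = length (q' j True) \<and> 1 \<le> length (q' j i) \<and> q' j i ! 0 = i"
    proof (cases "j < n - 1")
      case True then show ?thesis using w unfolding q'_def wfq_def by simp
    next
      case False
      show ?thesis
      proof (cases "j = n - 1")
        case True
        have a: "length (q j False) = length (q j True)" "1 \<le> length (q j i)" "q j i ! 0 = i"
          using w unfolding wfq_def by blast+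
        have "q j i \<noteq> []" using a(2) by auto
        then show ?thesis using a True False lE[of True] lE[of False] unfolding q'_def
          by (simp add: nth_append)
      next
        case False2: False
        then show ?thesis using False wC unfolding q'_def wfq_def by simp
      qed
    qed
  qed
  define Q' where "Q' = tree r q'"
  have brq': "r @ br q' (\<lambda>j. x ! j) n = p x @ E (x ! (n - 1))" for x
  proof -
    have nn: "n = Suc (n - 1)" using n by simp
    have "br q' (\<lambda>j. x ! j) (n - 1) = br q (\<lambda>j. x ! j) (n - 1)" by (rule br_cong) (simp add: q'_def)
    then have "br q' (\<lambda>j. x ! j) (Suc (n - 1)) = br q (\<lambda>j. x ! j) (Suc (n - 1)) @ E (x ! (n - 1))"
      by (simp add: br_Suc q'_def)
    then show ?thesis unfolding p_def using nn by (metis append_assoc)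
  qed
  have toQ': "to Q' x = tree (p x @ E (x ! (n - 1))) qC" if "length x = n" for x
  proof -
    have "(\<lambda>j. q' (j + n)) = qC" unfolding q'_def using n by (auto intro!: ext)
    then show ?thesis unfolding Q'_def using to_tree[OF wq', of r x] that brq'[of x] by simp
  qed
  have sA': "to Q' s = A'" using toQ'[OF s] eA' a'e unfolding E_def e_def by simp
  have tB': "to Q' t = B'" using toQ'[OF t] eB' b'e st unfolding E_def e'_def b'_def by simp
  have shiftQ': "to Q' x = sdot_tree (sdot (p y) (p x)) (to Q' y)"
    "to Q x = sdot_tree (sdot (p y) (p x)) (to Q y)"
    if "length x = n" "length y = n" "x ! (n - 1) = y ! (n - 1)" for x y
  proof -
    have l: "length (p x) = length (p y)" using lp[of x] lp[of y] by simp
    show "to Q' x = sdot_tree (sdot (p y) (p x)) (to Q' y)"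
      using toQ'[of x] toQ'[of y] that shift_tree[OF l] by simp
    show "to Q x = sdot_tree (sdot (p y) (p x)) (to Q y)"
      using toQ[of x] toQ[of y] that shift_tree[OF l, of "[]"] by simp
  qed
  have cone: "to Q' x \<in> P \<and> to Q' x \<subseteq> to Q x" if x: "length x = n" for x
  proof -
    obtain y where y: "length y = n" "x ! (n - 1) = y ! (n - 1)" "to Q' y \<in> P" "to Q' y \<subseteq> to Q y"
    proof (cases "x ! (n - 1) = s ! (n - 1)")
      case True then show ?thesis using that[of s] s sA' A'P A'A AsubQ by blast
    next
      case False
      then have "x ! (n - 1) = t ! (n - 1)" using st by (cases "x ! (n - 1)"; cases "s ! (n - 1)"; cases "t ! (n - 1)") auto
      then show ?thesis using that[of t] t tB' B'P B'B BsubQ by blast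
    qed
    have "to Q' x \<in> P" using shiftQ'(1)[OF x y(1,2)] y(3) L unfolding LTF_def by simp
    moreover have "to Q' x \<subseteq> to Q x" using shiftQ'[OF x y(1,2)] y(4) unfolding sdot_tree_def by auto
    ultimately show ?thesis by blast
  qed
  have Q'LC: "Q' \<in> LC n P" unfolding LC_def Q'_def using tree_LT[OF wq'] cone Q'_def by blast
  have "Q' \<subseteq> Q"
  proof
    fix u assume "u \<in> Q'"
    then obtain x where x: "length x = n" "u \<in> to Q' x" using tree_decomp[OF wq', of u r n] Q'_def by blast
    then show "u \<in> Q" using cone[OF x(1)] to_subset[of Q x] by blast
  qed
  moreover have "spl Q' k = spl Q k" if "k < n" for k
  proof -
    have "(\<Sum>j<k. length (q' j False)) = (\<Sum>j<k. length (q j False))"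
      by (rule sum.cong) (use that in \<open>auto simp: q'_def\<close>)
    then show ?thesis unfolding Q'_def eQ using spl_tree[OF wq'] spl_tree[OF w] by simp
  qed
  ultimately have "subseteq_n Q' n Q" unfolding subseteq_n_def by blast
  then show ?thesis using Q'LC cone sA' tB' A'B'D by blast
qed

lemma iterate:
  assumes L: "LTF P" and n: "n \<ge> 1" and Q: "Q \<in> LC n P" and D: "open_dense_in D (cprod P)"
  shows "\<exists>Q'\<in>LC n P. subseteq_n Q' n Q \<and> (\<forall>x. length x = n \<longrightarrow> to Q' x \<subseteq> to Q x)
           \<and> (\<forall>(s, t)\<in>set ps. length s = n \<and> length t = n \<and> s ! (n - 1) \<noteq> t ! (n - 1)
                 \<longrightarrow> (to Q' s, to Q' t) \<in> D)"
proof (induction ps)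
  case Nil
  show ?case using Q unfolding subseteq_n_def by auto
next
  case (Cons st ps)
  obtain s t where st: "st = (s, t)" by (cases st)
  obtain Q1 where Q1: "Q1 \<in> LC n P" "subseteq_n Q1 n Q" "\<forall>x. length x = n \<longrightarrow> to Q1 x \<subseteq> to Q x"
    "\<forall>(s, t)\<in>set ps. length s = n \<and> length t = n \<and> s ! (n - 1) \<noteq> t ! (n - 1) \<longrightarrow> (to Q1 s, to Q1 t) \<in> D"
    using Cons.IH by blast
  obtain Q2 where Q2: "Q2 \<in> LC n P" "subseteq_n Q2 n Q1" "\<forall>x. length x = n \<longrightarrow> to Q2 x \<subseteq> to Q1 x"
    "length s = n \<and> length t = n \<and> s ! (n - 1) \<noteq> t ! (n - 1) \<longrightarrow> (to Q2 s, to Q2 t) \<in> D"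
  proof (cases "length s = n \<and> length t = n \<and> s ! (n - 1) \<noteq> t ! (n - 1)")
    case True
    then show ?thesis using one_step[OF L n Q1(1) D] that by blast
  next
    case False
    then show ?thesis using that[of Q1] Q1(1) unfolding subseteq_n_def by blast
  qed
  have old: "(to Q2 s', to Q2 t') \<in> D"
    if "(s', t') \<in> set ps" "length s' = n" "length t' = n" "s' ! (n - 1) \<noteq> t' ! (n - 1)" for s' t'
  proof -
    have "(to Q1 s', to Q1 t') \<in> D" using Q1(4) that by blast
    moreover have "(to Q2 s', to Q2 t') \<in> cprod P" by (rule cone_cprod[OF Q2(1) that(2,3)])
    moreover have "cle (to Q2 s', to Q2 t') (to Q1 s', to Q1 t')" unfolding cle_def using Q2(3) that by auto
    ultimately show ?thesis using D unfolding open_dense_in_def by blast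
  qed
  have "subseteq_n Q2 n Q" using Q1(2) Q2(2) unfolding subseteq_n_def by auto
  moreover have "\<forall>x. length x = n \<longrightarrow> to Q2 x \<subseteq> to Q x" using Q1(3) Q2(3) by blast
  ultimately show ?case using Q2(1,4) old st by auto
qed

theorem lemma5p2:
  assumes "LTF P" and "n \<ge> 1" and "T \<in> LC n P"
    and "open_dense_in D (cprod P)"
  shows "\<exists>Q \<in> LC n P. subseteq_n Q n T \<and>
           (\<forall>s t. length s = n \<and> length t = n \<and> s ! (n - 1) \<noteq> t ! (n - 1)
                  \<longrightarrow> (to Q s, to Q t) \<in> D)"
proof -
  let ?X = "{xs :: bool list. set xs \<subseteq> UNIV \<and> length xs = n}"
  have fX: "finite ?X" by (rule finite_lists_length_eq) (rule finite_UNIV)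
  have "finite (?X \<times> ?X)" using fX fX by (rule finite_cartesian_product)
  from finite_list[OF this] obtain ps where ps: "set ps = ?X \<times> ?X" ..
  from iterate[OF assms, of ps] obtain Q where Q1: "Q \<in> LC n P" and
    Qr: "subseteq_n Q n T \<and> (\<forall>x. length x = n \<longrightarrow> to Q x \<subseteq> to T x) \<and>
      (\<forall>(s, t)\<in>set ps. length s = n \<and> length t = n \<and> s ! (n - 1) \<noteq> t ! (n - 1) \<longrightarrow> (to Q s, to Q t) \<in> D)"
    by (rule bexE)
  have Q2: "subseteq_n Q n T" using Qr by (rule conjunct1)
  have Q3: "\<forall>(s, t)\<in>set ps. length s = n \<and> length t = n \<and> s ! (n - 1) \<noteq> t ! (n - 1) \<longrightarrow> (to Q s, to Q t) \<in> D"
    using Qr by (elim conjE)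
  have "\<forall>s t. length s = n \<and> length t = n \<and> s ! (n - 1) \<noteq> t ! (n - 1) \<longrightarrow> (to Q s, to Q t) \<in> D"
  proof (intro allI impI)
    fix s t :: "bool list" assume h: "length s = n \<and> length t = n \<and> s ! (n - 1) \<noteq> t ! (n - 1)"
    then have "(s, t) \<in> set ps" using ps by simp
    then show "(to Q s, to Q t) \<in> D" using Q3 h by fast
  qed
  then show ?thesis using Q1 Q2 by blast
qed

end
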